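(* Let $P$ be (the normalised CFMDP of) a program over label set $\Sigma$, let $\Phi=(\varphi_e,\varphi_f)$ be a specification and let $\beta\in[0,1]$. If $\mathbb{P}_\Phi(P)\le\beta$, then there exist PCFAs $Q$ and $A$ over $\Sigma$ satisfying the following three conditions: (i) $\mathcal{L}(P)\subseteq\mathcal{L}(Q)\cup\mathcal{L}(A)$; (ii) for every $\tau\in\mathcal{L}(Q)$ and every $s\models\varphi_e$, $[\![\tau]\!](s)\not\models\neg\varphi_f$; (iii) $\mathbb{P}^{\mathcal{L}}_\Phi(\mathcal{L}(A))\le\beta$.
   Context: Labels. $\Sigma$ is a finite label set. It contains probabilistic labels $\mathrm{Pb}_{(i,\mathtt{L})}$ and $\mathrm{Pb}_{(i,\mathtt{R})}$, indexed by identifiers $i$ of fair binary probabilistic choices. The other labels are non-random (set $\Sigma^-$). PCFA. A PCFA is a tuple $(L,\Sigma,\delta,\ell_0,\ell_e)$ with $L$ finite, $\delta\subseteq L\times\Sigma\times L$ and unique accepting location $\ell_e$. Its language $\mathcal{L}$ is the set of finite words labelling paths from $\ell_0$ to $\ell_e$. CFMDP and CFMC. A CFMDP is a deterministic PCFA with no transitions out of $\ell_e$. The action of a transition labelled $\sigma\in\Sigma^-$ is $\sigma$, and that of a transition labelled $\mathrm{Pb}_{(i,d)}$ is $i$. A CFMC is a CFMDP in which all transitions out of each location share one action. A CFMDP is normalised if, whenever $\ell\xrightarrow{\mathrm{Pb}_{(i,\mathtt{L})}}\ell_1$ and $\ell\xrightarrow{\mathrm{Pb}_{(i,\mathtt{R})}}\ell_2$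 both exist, $\ell_1\neq\ell_2$. Strategies. $\mathcal{S}(\mathcal{A})$ is the set of finite-memory strategies for $\mathcal{A}$, and $\mathcal{A}^\psi$ is the induced CFMC. Semantics and weight. Labels are interpreted as functions $[\![\sigma]\!]$ on program states, with probabilistic and non-deterministic labels interpreted as the identity. $[\![\sigma_1\cdots\sigma_n]\!]=[\![\sigma_n]\!]\circ\cdots\circ[\![\sigma_1]\!]$. $wt(\tau)=2^{-n}$, where $n$ is the number of probabilistic labels in $\tau$. Violation probabilities. $$\mathbb{P}_\Phi(\mathcal{A})=\sup_{s\models\varphi_e}\sup_{\psi\in\mathcal{S}(\mathcal{A})}\sum_{\tau\in\mathcal{L}(\mathcal{A}^\psi)}wt(\tau)\,[\,[\![\tau]\!](s)\models\neg\varphi_f\,].$$ $\Theta\subseteq\Sigma^*$ is mergeable if $\Theta=\mathcal{L}(\mathcal{M})$ for a CFMC $\mathcal{M}$, and $\mathrm{Mergeable}(\Theta)$ is the set of mergeable subsets of $\Theta$. Then $$\mathbb{P}^{\mathcal{L}}_\Phi(\Theta)=\sup_{s\models\varphi_e}\sup_{\Pi\in\mathrm{Mergeable}(\Theta)}\sum_{\tau\in\Pi}wt(\tau)\,[\,[\![\tau]\!](s)\models\neg\varphi_f\,].$$ *)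

theory Defs
  imports "HOL-Analysis.Analysis"
begin

datatype dir = Lft | Rgt

text \<open>Probabilistic labels Pb i d (fair binary choice i, branch d) and non-random labels Op a.\<close>
datatype ('i, 'a) lbl = Pb 'i dir | Op 'a

fun is_pb :: "('i, 'a) lbl \<Rightarrow> bool" where
  "is_pb (Pb i d) = True"
| "is_pb (Op a) = False"

fun action :: "('i, 'a) lbl \<Rightarrow> ('i, 'a) lbl + 'i" where
  "action (Pb i d) = Inr i"
| "action (Op a) = Inl (Op a)"

record ('q, 'l) pcfa =
  p_locs  :: "'q set"
  p_trans :: "('q \<times> 'l \<times> 'q) set"
  p_init  :: 'q
  p_final :: 'q

definition is_pcfa :: "'l set \<Rightarrow> ('q, 'l) pcfa \<Rightarrow> bool" where
  "is_pcfa Sig A \<longleftrightarrow> finite (p_locs A) \<and> p_trans A \<subseteq> p_locs A \<times> Sig \<times> p_locs A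
     \<and> p_init A \<in> p_locs A \<and> p_final A \<in> p_locs A"

fun reach :: "('q, 'l) pcfa \<Rightarrow> 'q \<Rightarrow> 'l list \<Rightarrow> 'q \<Rightarrow> bool" where
  "reach A q [] q' = (q = q')"
| "reach A q (s # w) q' = (\<exists>p. (q, s, p) \<in> p_trans A \<and> reach A p w q')"

definition lang :: "('q, 'l) pcfa \<Rightarrow> 'l list set" where
  "lang A = {w. reach A (p_init A) w (p_final A)}"

definition deterministic :: "('q, 'l) pcfa \<Rightarrow> bool" where
  "deterministic A \<longleftrightarrow> (\<forall>q s p p'. (q, s, p) \<in> p_trans A \<longrightarrow> (q, s, p') \<in> p_trans A \<longrightarrow> p = p')"

definition cfmdp :: "('i, 'a) lbl set \<Rightarrow> ('q, ('i, 'a) lbl) pcfa \<Rightarrow> bool" where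
  "cfmdp Sig A \<longleftrightarrow> is_pcfa Sig A \<and> deterministic A \<and> (\<forall>s p. (p_final A, s, p) \<notin> p_trans A)"

definition cfmc :: "('i, 'a) lbl set \<Rightarrow> ('q, ('i, 'a) lbl) pcfa \<Rightarrow> bool" where
  "cfmc Sig A \<longleftrightarrow> cfmdp Sig A \<and>
     (\<forall>q s p s' p'. (q, s, p) \<in> p_trans A \<longrightarrow> (q, s', p') \<in> p_trans A \<longrightarrow> action s = action s')"

definition normalised :: "('q, ('i, 'a) lbl) pcfa \<Rightarrow> bool" where
  "normalised A \<longleftrightarrow> (\<forall>q i p1 p2. (q, Pb i Lft, p1) \<in> p_trans A \<longrightarrow> (q, Pb i Rgt, p2) \<in> p_trans A \<longrightarrow> p1 \<noteq> p2)"

record ('q, 'i, 'a) fmstrat =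
  s_mem  :: "nat set"
  s_m0   :: nat
  s_upd  :: "nat \<Rightarrow> 'q \<Rightarrow> ('i, 'a) lbl \<Rightarrow> nat"
  s_ch   :: "'q \<Rightarrow> nat \<Rightarrow> ('i, 'a) lbl + 'i"

definition is_fmstrat :: "('q, ('i, 'a) lbl) pcfa \<Rightarrow> ('q, 'i, 'a) fmstrat \<Rightarrow> bool" where
  "is_fmstrat A S \<longleftrightarrow> finite (s_mem S) \<and> s_m0 S \<in> s_mem S \<and>
     (\<forall>m \<in> s_mem S. \<forall>q s p. (q, s, p) \<in> p_trans A \<longrightarrow> s_upd S m q s \<in> s_mem S)"

text \<open>Runs of the induced CFMC A^psi: product of A with the memory, keeping at (q,m) only
  the transitions whose action is the chosen one.\<close>
fun ind_reach :: "('q, ('i, 'a) lbl) pcfa \<Rightarrow> ('q, 'i, 'a) fmstrat \<Rightarrow> 'q \<Rightarrow> nat \<Rightarrow> ('i, 'a) lbl list \<Rightarrow> bool" where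
  "ind_reach A S q m [] = (q = p_final A)"
| "ind_reach A S q m (s # w) =
     (\<exists>p. (q, s, p) \<in> p_trans A \<and> action s = s_ch S q m \<and> ind_reach A S p (s_upd S m q s) w)"

definition induced_lang :: "('q, ('i, 'a) lbl) pcfa \<Rightarrow> ('q, 'i, 'a) fmstrat \<Rightarrow> ('i, 'a) lbl list set" where
  "induced_lang A S = {w. ind_reach A S (p_init A) (s_m0 S) w}"

definition sem :: "('a \<Rightarrow> 's \<Rightarrow> 's) \<Rightarrow> ('i, 'a) lbl list \<Rightarrow> 's \<Rightarrow> 's" where
  "sem I w s = fold (\<lambda>l t. case l of Pb i d \<Rightarrow> t | Op a \<Rightarrow> I a t) w s"

definition wt :: "('i, 'a) lbl list \<Rightarrow> ennreal" where
  "wt w = ennreal ((1/2) ^ length (filter is_pb w))"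

definition viol_mass :: "('a \<Rightarrow> 's \<Rightarrow> 's) \<Rightarrow> ('s \<Rightarrow> bool) \<Rightarrow> 's \<Rightarrow> ('i, 'a) lbl list set \<Rightarrow> ennreal" where
  "viol_mass I phi_f s W = (\<Sum>\<^sub>\<infinity> w \<in> W. (if \<not> phi_f (sem I w s) then wt w else 0))"

definition PPhi :: "('a \<Rightarrow> 's \<Rightarrow> 's) \<Rightarrow> ('s \<Rightarrow> bool) \<Rightarrow> ('s \<Rightarrow> bool) \<Rightarrow> ('q, ('i, 'a) lbl) pcfa \<Rightarrow> ennreal" where
  "PPhi I phi_e phi_f A =
     (SUP s \<in> {s. phi_e s}. SUP S \<in> {S. is_fmstrat A S}. viol_mass I phi_f s (induced_lang A S))"

definition mergeable :: "('i, 'a) lbl set \<Rightarrow> ('i, 'a) lbl list set \<Rightarrow> bool" where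
  "mergeable Sig Th \<longleftrightarrow> (\<exists>M :: (nat, ('i, 'a) lbl) pcfa. cfmc Sig M \<and> Th = lang M)"

definition Mergeable :: "('i, 'a) lbl set \<Rightarrow> ('i, 'a) lbl list set \<Rightarrow> ('i, 'a) lbl list set set" where
  "Mergeable Sig Th = {Pi. Pi \<subseteq> Th \<and> mergeable Sig Pi}"

definition PL :: "('i, 'a) lbl set \<Rightarrow> ('a \<Rightarrow> 's \<Rightarrow> 's) \<Rightarrow> ('s \<Rightarrow> bool) \<Rightarrow> ('s \<Rightarrow> bool) \<Rightarrow> ('i, 'a) lbl list set \<Rightarrow> ennreal" where
  "PL Sig I phi_e phi_f Th =
     (SUP s \<in> {s. phi_e s}. SUP Pi \<in> Mergeable Sig Th. viol_mass I phi_f s Pi)"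

end

theory Submission
  imports Defs
begin

lemma viol_mono:
  assumes "W \<subseteq> V"
  shows "viol_mass I phi_f s W \<le> viol_mass I phi_f s V"
  unfolding viol_mass_def
proof (rule infsum_mono_neutral)
  show "(\<lambda>w. if \<not> phi_f (sem I w s) then wt w else 0) summable_on W"
    by (rule nonneg_summable_on_complete) simp
  show "(\<lambda>w. if \<not> phi_f (sem I w s) then wt w else 0) summable_on V"
    by (rule nonneg_summable_on_complete) simp
qed (use assms in auto)
lemma reach_rename:
  assumes inj: "inj_on f (p_locs P)" and tr: "p_trans P \<subseteq> p_locs P \<times> UNIV \<times> p_locs P"
    and A: "p_trans A = {(f q, s, f p) | q s p. (q, s, p) \<in> p_trans P}"
  shows "q \<in> p_locs P \<Longrightarrow> q' \<in> p_locs P \<Longrightarrow> reach A (f q) w (f q') \<longleftrightarrow> reach P q w q'"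
proof (induction w arbitrary: q)
  case Nil
  then show ?case using inj by (auto dest: inj_onD)
next
  case (Cons s w)
  show ?case
  proof
    assume "reach A (f q) (s # w) (f q')"
    then obtain p' where h: "(f q, s, p') \<in> p_trans A" "reach A p' w (f q')" by auto
    then obtain q0 p where "(q0, s, p) \<in> p_trans P" "f q0 = f q" "p' = f p" using A by auto
    moreover then have "q0 \<in> p_locs P" "p \<in> p_locs P" using tr by auto
    ultimately show "reach P q (s # w) q'"
      using Cons h inj by (auto dest: inj_onD)
  next
    assume "reach P q (s # w) q'"
    then obtain p where h: "(q, s, p) \<in> p_trans P" "reach P p w q'" by auto
    then have "p \<in> p_locs P" using tr by auto
    then show "reach A (f q) (s # w) (f q')" using h Cons A by auto
  qed
qed

lemma ind_reach_of_M:
  fixes M :: "(nat, ('i, 'a) lbl) pcfa" and P :: "('q, ('i, 'a) lbl) pcfa"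
  assumes ch: "\<And>q m t p. (m, t, p) \<in> p_trans M \<Longrightarrow> s_ch S q m = action t"
    and upd: "\<And>q m s p. (m, s, p) \<in> p_trans M \<Longrightarrow> s_upd S m q s = p"
  shows "reach M m w (p_final M) \<Longrightarrow> reach P q w (p_final P) \<Longrightarrow> ind_reach P S q m w"
proof (induction w arbitrary: q m)
  case Nil then show ?case by simp
next
  case (Cons s w)
  obtain m' where m': "(m, s, m') \<in> p_trans M" "reach M m' w (p_final M)" using Cons.prems by auto
  obtain p where p: "(q, s, p) \<in> p_trans P" "reach P p w (p_final P)" using Cons.prems by auto
  have "ind_reach P S p m' w" using Cons.IH[OF m'(2) p(2)] .
  then show ?case using p(1) ch[OF m'(1)] upd[OF m'(1)] by auto
qed

lemma strat_props:
  fixes M :: "(nat, ('i, 'a) lbl) pcfa"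
  assumes M: "cfmc Sig M"
  shows "(m, t, p) \<in> p_trans M \<Longrightarrow> (if \<exists>t p. (m, t, p) \<in> p_trans M then action (SOME t. \<exists>p. (m, t, p) \<in> p_trans M) else undefined) = action t"
    and "(m, s, p) \<in> p_trans M \<Longrightarrow> (if \<exists>p. (m, s, p) \<in> p_trans M then (SOME p. (m, s, p) \<in> p_trans M) else p_init M) = p"
proof -
  have act: "\<And>q s p s' p'. (q, s, p) \<in> p_trans M \<Longrightarrow> (q, s', p') \<in> p_trans M \<Longrightarrow> action s = action s'"
    using M unfolding cfmc_def by blast
  assume h: "(m, t, p) \<in> p_trans M"
  then have ex: "\<exists>t p. (m, t, p) \<in> p_trans M" by blast
  have "\<exists>p. (m, SOME t. \<exists>p. (m, t, p) \<in> p_trans M, p) \<in> p_trans M"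
    using someI_ex[of "\<lambda>t. \<exists>p. (m, t, p) \<in> p_trans M"] ex by blast
  then obtain p0 where "(m, SOME t. \<exists>p. (m, t, p) \<in> p_trans M, p0) \<in> p_trans M" by blast
  from act[OF this h] ex show "(if \<exists>t p. (m, t, p) \<in> p_trans M then action (SOME t. \<exists>p. (m, t, p) \<in> p_trans M) else undefined) = action t"
    by simp
next
  have det: "deterministic M" using M unfolding cfmc_def cfmdp_def by auto
  assume h: "(m, s, p) \<in> p_trans M"
  have "(m, s, SOME p. (m, s, p) \<in> p_trans M) \<in> p_trans M"
    using someI_ex[of "\<lambda>p. (m, s, p) \<in> p_trans M"] h by blast
  then have "(SOME p. (m, s, p) \<in> p_trans M) = p" using det h unfolding deterministic_def by blast
  then show "(if \<exists>p. (m, s, p) \<in> p_trans M then (SOME p. (m, s, p) \<in> p_trans M) else p_init M) = p"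
    using h by auto
qed
theorem mainTheorem6:
  fixes Sig :: "('i, 'a) lbl set"
    and P :: "('q, ('i, 'a) lbl) pcfa"
    and I :: "'a \<Rightarrow> 's \<Rightarrow> 's"
    and phi_e phi_f :: "'s \<Rightarrow> bool"
    and \<beta> :: real
  assumes "finite Sig"
    and "\<forall>i. Pb i Lft \<in> Sig \<longleftrightarrow> Pb i Rgt \<in> Sig"
    and "cfmdp Sig P" and "normalised P"
    and "0 \<le> \<beta>" and "\<beta> \<le> 1"
    and "PPhi I phi_e phi_f P \<le> ennreal \<beta>"
  shows "\<exists>(Q :: (nat, ('i, 'a) lbl) pcfa) (A :: (nat, ('i, 'a) lbl) pcfa).
           is_pcfa Sig Q \<and> is_pcfa Sig A
         \<and> lang P \<subseteq> lang Q \<union> lang A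
         \<and> (\<forall>\<tau> \<in> lang Q. \<forall>s. phi_e s \<longrightarrow> \<not> \<not> phi_f (sem I \<tau> s))
         \<and> PL Sig I phi_e phi_f (lang A) \<le> ennreal \<beta>"
proof -
  have pP: "is_pcfa Sig P" using assms(3) unfolding cfmdp_def by auto
  define f where "f = to_nat_on (p_locs P)"
  have inj: "inj_on f (p_locs P)" unfolding f_def
    using pP unfolding is_pcfa_def by (auto intro: inj_on_to_nat_on countable_finite)
  define A :: "(nat, ('i, 'a) lbl) pcfa" where "A = \<lparr>p_locs = f ` p_locs P,
     p_trans = {(f q, s, f p) | q s p. (q, s, p) \<in> p_trans P},
     p_init = f (p_init P), p_final = f (p_final P)\<rparr>"
  define Q :: "(nat, ('i, 'a) lbl) pcfa" where "Q = \<lparr>p_locs = {0,1}, p_trans = {}, p_init = 0, p_final = 1\<rparr>"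
  have tr: "p_trans P \<subseteq> p_locs P \<times> UNIV \<times> p_locs P" using pP unfolding is_pcfa_def by auto
  have langA: "lang A = lang P"
    using reach_rename[OF inj tr, of A] pP unfolding lang_def is_pcfa_def by (auto simp: A_def)
  have langQ: "lang Q = {}"
  proof -
    have "\<And>w q. reach Q q w 1 \<Longrightarrow> q = 1 \<and> w = []"
      subgoal for w q by (cases w) (auto simp: Q_def)
      done
    then show ?thesis unfolding lang_def by (auto simp: Q_def)
  qed
  have iQ: "is_pcfa Sig Q" by (auto simp: Q_def is_pcfa_def)
  have iA: "is_pcfa Sig A" using pP unfolding is_pcfa_def A_def by auto
  have PL: "PL Sig I phi_e phi_f (lang A) \<le> ennreal \<beta>"
    unfolding PL_def
  proof (intro SUP_least)
    fix s Pi assume s: "s \<in> {s. phi_e s}" and Pi: "Pi \<in> Mergeable Sig (lang A)"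
    then obtain M :: "(nat, ('i, 'a) lbl) pcfa" where M: "cfmc Sig M" "Pi = lang M" "lang M \<subseteq> lang P"
      unfolding Mergeable_def mergeable_def using langA by auto
    define S :: "('q, 'i, 'a) fmstrat" where "S = \<lparr>s_mem = p_locs M, s_m0 = p_init M,
      s_upd = (\<lambda>m q s. if \<exists>p. (m, s, p) \<in> p_trans M then (SOME p. (m, s, p) \<in> p_trans M) else p_init M),
      s_ch = (\<lambda>q m. if \<exists>t p. (m, t, p) \<in> p_trans M then action (SOME t. \<exists>p. (m, t, p) \<in> p_trans M) else undefined)\<rparr>"
    have pM: "is_pcfa Sig M" using M(1) unfolding cfmc_def cfmdp_def by auto
    have fS: "is_fmstrat P S" unfolding is_fmstrat_def
    proof (intro conjI ballI allI impI)
      show "finite (s_mem S)" "s_m0 S \<in> s_mem S" using pM unfolding is_pcfa_def S_def by auto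
    next
      fix m q s p assume "m \<in> s_mem S" "(q, s, p) \<in> p_trans P"
      show "s_upd S m q s \<in> s_mem S"
      proof (cases "\<exists>p. (m, s, p) \<in> p_trans M")
        case True
        then have "(m, s, SOME p. (m, s, p) \<in> p_trans M) \<in> p_trans M" by (metis someI_ex)
        then show ?thesis using True pM unfolding is_pcfa_def S_def by auto
      next
        case False then show ?thesis using pM unfolding is_pcfa_def S_def by auto
      qed
    qed
    have ch: "\<And>q m t p. (m, t, p) \<in> p_trans M \<Longrightarrow> s_ch S q m = action t"
      unfolding S_def using strat_props(1)[OF M(1)] by simp
    have upd: "\<And>q m s p. (m, s, p) \<in> p_trans M \<Longrightarrow> s_upd S m q s = p"
      unfolding S_def using strat_props(2)[OF M(1)] by simp
    have sub: "lang M \<subseteq> induced_lang P S"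
    proof
      fix w assume w: "w \<in> lang M"
      then have "w \<in> lang P" using M by auto
      then have "ind_reach P S (p_init P) (s_m0 S) w"
        using ind_reach_of_M[OF ch upd] w unfolding lang_def S_def by simp
      then show "w \<in> induced_lang P S" unfolding induced_lang_def by simp
    qed
    have "viol_mass I phi_f s Pi \<le> viol_mass I phi_f s (induced_lang P S)"
      using viol_mono[OF sub] M(2) by simp
    also have "\<dots> \<le> PPhi I phi_e phi_f P"
      unfolding PPhi_def
      by (rule SUP_upper2[OF s], rule SUP_upper) (use fS in auto)
    also have "\<dots> \<le> ennreal \<beta>" by fact
    finally show "viol_mass I phi_f s Pi \<le> ennreal \<beta>" .
  qed
  show ?thesis
    by (rule exI[of _ Q], rule exI[of _ A]) (use iQ iA langA langQ PL in auto)
qed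

end
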